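(* If (A.4) holds, then for any fixed $\zeta\in(0,1)$, \[ |F_\omega(x^\star_{\omega,\tau})-F_\omega(x^\star_\omega)|=\mathcal{O}(\tau^{1-\zeta}). \]
   Context: Let $\Omega=(t_0,t_E)$ bounded, $|\Omega|=t_E-t_0$, $t_1,\dots,t_M\in[t_0,t_E]$; $\mathcal{X}=(H^1(\Omega))^{n_y}\times(L^2(\Omega))^{n_z}$ with product inner product and norm $\|\cdot\|_{\mathcal{X}}$, $x=(y,z)$. For $f,c,b$: $F(x)=\int_\Omega f(\dot y,y,z,t)dt$, $r(x)=\int_\Omega\|c(\dot y,y,z,t)\|_2^2dt+\|b(y(t_1),\dots,y(t_M))\|_2^2$, $\Gamma(x)=-\sum_{j=1}^{n_z}\int_\Omega\log z_j(t)dt$. DOP: minimize $F$ subject to $b(\dots)=0$, $c=0$, $z\ge0$ a.e., with global minimizer $x^\star$. For $\omega\in(0,1)$: $F_\omega=F+\frac1{2\omega}r$ and $x^\star_\omega$ minimizes $F_\omega$ over $\{z\ge0\text{ a.e.}\}$. For $\tau\in(0,\omega]$: $F_{\omega,\tau}=F_\omega+\tau\Gamma$ and $x^\star_{\omega,\tau}$ minimizes $F_{\omega,\tau}$ over $\mathcal{X}$. Standing assumptions: (A.2) $\|c(\dot y(t),y(t),z(t),t)\|_1$ and $\|b(\dots)\|_1$ bounded for all $x$ with $z\ge0$, $t\in\Omega$; $F$ bounded below on $\{z\ge0\}$. (A.3) $f,c,b$ globally Lipschitz in all arguments except $t$. (A.4) $x^\star_\omega$ and $x^\star_{\omega,\tau}$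 are bounded in $\|z\|_{L^\infty(\Omega)}$ and $\|x\|_{\mathcal{X}}$, and $\|x^\star\|_{\mathcal{X}}$ is bounded. The $\mathcal{O}$ is as $\tau\to0$. *)

theory Defs
  imports "HOL-Analysis.Analysis" "HOL-Library.Landau_Symbols"
begin

abbreviation Om :: "real \<Rightarrow> real \<Rightarrow> real measure" where
  "Om t0 tE \<equiv> lebesgue_on {t0<..<tE}"

definition L2 :: "real \<Rightarrow> real \<Rightarrow> (real \<Rightarrow> 'a::euclidean_space) \<Rightarrow> bool" where
  "L2 t0 tE u \<longleftrightarrow> u \<in> borel_measurable (Om t0 tE) \<and>
     integrable (Om t0 tE) (\<lambda>t. (norm (u t))\<^sup>2)"

text \<open>dy is a (square integrable) weak derivative of y; y is the continuous representative.\<close>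
definition weak_deriv :: "real \<Rightarrow> real \<Rightarrow> (real \<Rightarrow> 'a::euclidean_space) \<Rightarrow> (real \<Rightarrow> 'a) \<Rightarrow> bool" where
  "weak_deriv t0 tE y dy \<longleftrightarrow> L2 t0 tE dy \<and>
     (\<forall>t\<in>{t0..tE}. y t = y t0 + integral\<^sup>L (lebesgue_on {t0..t}) dy)"

definition H1 :: "real \<Rightarrow> real \<Rightarrow> (real \<Rightarrow> 'a::euclidean_space) \<Rightarrow> bool" where
  "H1 t0 tE y \<longleftrightarrow> (\<exists>dy. weak_deriv t0 tE y dy)"

text \<open>The (a.e. unique) weak derivative \<open>y'\<close>.\<close>
definition wdot :: "real \<Rightarrow> real \<Rightarrow> (real \<Rightarrow> 'a::euclidean_space) \<Rightarrow> (real \<Rightarrow> 'a)" where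
  "wdot t0 tE y = (SOME dy. weak_deriv t0 tE y dy)"

definition Xsp :: "real \<Rightarrow> real \<Rightarrow> ((real \<Rightarrow> 'y::euclidean_space) \<times> (real \<Rightarrow> 'z::euclidean_space)) set" where
  "Xsp t0 tE = {(y, z). H1 t0 tE y \<and> L2 t0 tE z}"

definition normX :: "real \<Rightarrow> real \<Rightarrow> (real \<Rightarrow> 'y::euclidean_space) \<times> (real \<Rightarrow> 'z::euclidean_space) \<Rightarrow> real" where
  "normX t0 tE x = (case x of (y, z) \<Rightarrow>
     sqrt (integral\<^sup>L (Om t0 tE) (\<lambda>t. (norm (y t))\<^sup>2)
         + integral\<^sup>L (Om t0 tE) (\<lambda>t. (norm (wdot t0 tE y t))\<^sup>2)
         + integral\<^sup>L (Om t0 tE) (\<lambda>t. (norm (z t))\<^sup>2)))"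

definition znonneg :: "real \<Rightarrow> real \<Rightarrow> (real \<Rightarrow> 'z::euclidean_space) \<Rightarrow> bool" where
  "znonneg t0 tE z \<longleftrightarrow> (AE t in Om t0 tE. \<forall>j\<in>Basis. 0 \<le> z t \<bullet> j)"

definition norm1 :: "'a::euclidean_space \<Rightarrow> real" where
  "norm1 v = (\<Sum>j\<in>Basis. \<bar>v \<bullet> j\<bar>)"

definition Fobj :: "real \<Rightarrow> real \<Rightarrow> ('y::euclidean_space \<Rightarrow> 'y \<Rightarrow> 'z::euclidean_space \<Rightarrow> real \<Rightarrow> real)
   \<Rightarrow> (real \<Rightarrow> 'y) \<times> (real \<Rightarrow> 'z) \<Rightarrow> real" where
  "Fobj t0 tE f x = (case x of (y, z) \<Rightarrow>
     integral\<^sup>L (Om t0 tE) (\<lambda>t. f (wdot t0 tE y t) (y t) (z t) t))"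

definition rpen :: "real \<Rightarrow> real \<Rightarrow> ('y::euclidean_space \<Rightarrow> 'y \<Rightarrow> 'z::euclidean_space \<Rightarrow> real \<Rightarrow> 'c::euclidean_space)
   \<Rightarrow> ('y list \<Rightarrow> 'b::euclidean_space) \<Rightarrow> real list
   \<Rightarrow> (real \<Rightarrow> 'y) \<times> (real \<Rightarrow> 'z) \<Rightarrow> real" where
  "rpen t0 tE c b tps x = (case x of (y, z) \<Rightarrow>
     integral\<^sup>L (Om t0 tE) (\<lambda>t. (norm (c (wdot t0 tE y t) (y t) (z t) t))\<^sup>2)
     + (norm (b (map y tps)))\<^sup>2)"

definition Gamma :: "real \<Rightarrow> real \<Rightarrow> (real \<Rightarrow> 'y) \<times> (real \<Rightarrow> 'z::euclidean_space) \<Rightarrow> ereal" where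
  "Gamma t0 tE x = (case x of (y, z) \<Rightarrow>
     (if (\<forall>j\<in>Basis. (AE t in Om t0 tE. 0 < z t \<bullet> j) \<and> integrable (Om t0 tE) (\<lambda>t. ln (z t \<bullet> j)))
      then ereal (- (\<Sum>j\<in>Basis. integral\<^sup>L (Om t0 tE) (\<lambda>t. ln (z t \<bullet> j))))
      else \<infinity>))"

definition Fw :: "real \<Rightarrow> real \<Rightarrow> ('y::euclidean_space \<Rightarrow> 'y \<Rightarrow> 'z::euclidean_space \<Rightarrow> real \<Rightarrow> real)
   \<Rightarrow> ('y \<Rightarrow> 'y \<Rightarrow> 'z \<Rightarrow> real \<Rightarrow> 'c::euclidean_space)
   \<Rightarrow> ('y list \<Rightarrow> 'b::euclidean_space) \<Rightarrow> real list \<Rightarrow> real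
   \<Rightarrow> (real \<Rightarrow> 'y) \<times> (real \<Rightarrow> 'z) \<Rightarrow> real" where
  "Fw t0 tE f c b tps \<omega> x = Fobj t0 tE f x + rpen t0 tE c b tps x / (2 * \<omega>)"

definition Fwt :: "real \<Rightarrow> real \<Rightarrow> ('y::euclidean_space \<Rightarrow> 'y \<Rightarrow> 'z::euclidean_space \<Rightarrow> real \<Rightarrow> real)
   \<Rightarrow> ('y \<Rightarrow> 'y \<Rightarrow> 'z \<Rightarrow> real \<Rightarrow> 'c::euclidean_space)
   \<Rightarrow> ('y list \<Rightarrow> 'b::euclidean_space) \<Rightarrow> real list \<Rightarrow> real \<Rightarrow> real
   \<Rightarrow> (real \<Rightarrow> 'y) \<times> (real \<Rightarrow> 'z) \<Rightarrow> ereal" where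
  "Fwt t0 tE f c b tps \<omega> \<tau> x = ereal (Fw t0 tE f c b tps \<omega> x) + ereal \<tau> * Gamma t0 tE x"

end

theory Submission
  imports Defs
begin

lemma fin_Om: "finite_measure (Om t0 tE)"
  by (simp add: finite_measure_lebesgue_on)

lemma One_inner: "j \<in> Basis \<Longrightarrow> (One::'a::euclidean_space) \<bullet> j = 1"
  by (simp add: inner_sum_left inner_Basis if_distrib cong: if_cong)

lemma shift_L2:
  fixes z :: "real \<Rightarrow> 'z::euclidean_space"
  assumes "L2 t0 tE z" "AE t in Om t0 tE. norm (z t) \<le> C"
  shows "L2 t0 tE (\<lambda>t. z t + e *\<^sub>R One)"
proof -
  have m: "z \<in> borel_measurable (Om t0 tE)" using assms(1) by (simp add: L2_def)
  have m2: "(\<lambda>t. z t + e *\<^sub>R One) \<in> borel_measurable (Om t0 tE)" using m by measurable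
  have "integrable (Om t0 tE) (\<lambda>t. (norm (z t + e *\<^sub>R One))\<^sup>2)"
  proof (rule finite_measure.integrable_const_bound[OF fin_Om, where B="(C + \<bar>e\<bar> * norm (One::'z))\<^sup>2"])
    show "AE t in Om t0 tE. norm ((norm (z t + e *\<^sub>R One))\<^sup>2) \<le> (C + \<bar>e\<bar> * norm (One::'z))\<^sup>2"
      using assms(2)
    proof eventually_elim
      case (elim t)
      have "norm (z t + e *\<^sub>R One) \<le> norm (z t) + \<bar>e\<bar> * norm (One::'z)"
        using norm_triangle_ineq[of "z t" "e *\<^sub>R One"] by simp
      also have "\<dots> \<le> C + \<bar>e\<bar> * norm (One::'z)" using elim by simp
      finally show ?case by (simp add: power_mono)
    qed
    show "(\<lambda>t. (norm (z t + e *\<^sub>R One))\<^sup>2) \<in> borel_measurable (Om t0 tE)" using m2 by measurable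
  qed
  then show ?thesis using m2 by (simp add: L2_def)
qed

lemma shift_Xsp:
  assumes "(y, z) \<in> Xsp t0 tE" "AE t in Om t0 tE. norm (z t) \<le> C"
  shows "(y, \<lambda>t. z t + e *\<^sub>R One) \<in> Xsp t0 tE"
  using assms shift_L2[of t0 tE z C e] by (simp add: Xsp_def)

lemma shift_Gamma:
  fixes z :: "real \<Rightarrow> 'z::euclidean_space"
  assumes "L2 t0 tE z" "znonneg t0 tE z" "AE t in Om t0 tE. norm (z t) \<le> C" "0 < e"
  shows "\<exists>g. Gamma t0 tE (y, \<lambda>t. z t + e *\<^sub>R One) = ereal g \<and>
     g \<le> - real DIM('z) * ln e * measure (Om t0 tE) {t0<..<tE}"
proof -
  let ?M = "Om t0 tE"
  have m: "z \<in> borel_measurable ?M" using assms(1) by (simp add: L2_def)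
  have comp: "(z t + e *\<^sub>R One) \<bullet> j = z t \<bullet> j + e" if "j \<in> Basis" for t j
    using that by (simp add: inner_add_left One_inner)
  have pos: "AE t in ?M. 0 < (z t + e *\<^sub>R One) \<bullet> j" if j: "j \<in> Basis" for j
    using assms(2) unfolding znonneg_def
    by eventually_elim (use j assms(4) comp in force)
  have int: "integrable ?M (\<lambda>t. ln ((z t + e *\<^sub>R One) \<bullet> j))" if j: "j \<in> Basis" for j
  proof (rule finite_measure.integrable_const_bound[OF fin_Om, where B="\<bar>ln e\<bar> + C + e"])
    show "(\<lambda>t. ln ((z t + e *\<^sub>R One) \<bullet> j)) \<in> borel_measurable ?M" using m by measurable
    show "AE t in ?M. norm (ln ((z t + e *\<^sub>R One) \<bullet> j)) \<le> \<bar>ln e\<bar> + C + e"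
      using assms(2,3) unfolding znonneg_def
    proof eventually_elim
      case (elim t)
      have a: "0 \<le> z t \<bullet> j" using elim j by blast
      have b: "z t \<bullet> j \<le> C" using Basis_le_norm[OF j, of "z t"] elim by linarith
      have c: "ln e \<le> ln (z t \<bullet> j + e)" using a assms(4) by simp
      have d: "ln (z t \<bullet> j + e) \<le> z t \<bullet> j + e" using a assms(4) ln_less_self[of "z t \<bullet> j + e"] by linarith
      have "\<bar>ln (z t \<bullet> j + e)\<bar> \<le> \<bar>ln e\<bar> + C + e"
        using a b c d assms(4) abs_ge_self[of "ln e"] abs_ge_minus_self[of "ln e"] by (simp only: abs_le_iff) linarith
      then show ?case using comp[OF j] by simp
    qed
  qed
  have lb: "ln e * measure ?M {t0<..<tE} \<le> integral\<^sup>L ?M (\<lambda>t. ln ((z t + e *\<^sub>R One) \<bullet> j))"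
    if j: "j \<in> Basis" for j
  proof -
    have "integral\<^sup>L ?M (\<lambda>t. ln e) \<le> integral\<^sup>L ?M (\<lambda>t. ln ((z t + e *\<^sub>R One) \<bullet> j))"
    proof (rule integral_mono_AE)
      show "integrable ?M (\<lambda>t. ln e)" by (rule finite_measure.integrable_const[OF fin_Om])
      show "integrable ?M (\<lambda>t. ln ((z t + e *\<^sub>R One) \<bullet> j))" by (rule int[OF j])
      show "AE t in ?M. ln e \<le> ln ((z t + e *\<^sub>R One) \<bullet> j)"
        using assms(2) unfolding znonneg_def
        by eventually_elim (use j assms(4) comp in force)
    qed
    then show ?thesis by (simp add: mult.commute)
  qed
  have "Gamma t0 tE (y, \<lambda>t. z t + e *\<^sub>R One) = ereal (- (\<Sum>j\<in>Basis. integral\<^sup>L ?M (\<lambda>t. ln ((z t + e *\<^sub>R One) \<bullet> j))))"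
    using pos int by (simp add: Gamma_def)
  moreover have "- (\<Sum>j\<in>Basis. integral\<^sup>L ?M (\<lambda>t. ln ((z t + e *\<^sub>R One) \<bullet> j))) \<le> - real DIM('z) * ln e * measure ?M {t0<..<tE}"
  proof -
    have "(\<Sum>j\<in>(Basis::'z set). ln e * measure ?M {t0<..<tE}) \<le> (\<Sum>j\<in>Basis. integral\<^sup>L ?M (\<lambda>t. ln ((z t + e *\<^sub>R One) \<bullet> j)))"
      by (rule sum_mono) (rule lb)
    then show ?thesis by simp
  qed
  ultimately show ?thesis by blast
qed


lemma Gamma_fin:
  fixes z :: "real \<Rightarrow> 'z::euclidean_space"
  assumes "Gamma t0 tE (y, z) \<noteq> \<infinity>" "AE t in Om t0 tE. norm (z t) \<le> C"
  shows "znonneg t0 tE z \<and> (\<exists>g. Gamma t0 tE (y, z) = ereal g \<and>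
     - real DIM('z) * C * measure (Om t0 tE) {t0<..<tE} \<le> g)"
proof -
  let ?M = "Om t0 tE"
  have H: "\<forall>j\<in>Basis. (AE t in ?M. 0 < z t \<bullet> j) \<and> integrable ?M (\<lambda>t. ln (z t \<bullet> j))"
    using assms(1) by (auto simp: Gamma_def split: if_splits)
  have G: "Gamma t0 tE (y, z) = ereal (- (\<Sum>j\<in>Basis. integral\<^sup>L ?M (\<lambda>t. ln (z t \<bullet> j))))"
    using H by (simp add: Gamma_def)
  have "AE t in ?M. \<forall>j\<in>Basis. 0 < z t \<bullet> j"
    using H by (intro eventually_ball_finite) auto
  then have zn: "znonneg t0 tE z" unfolding znonneg_def
    by eventually_elim (auto intro: less_imp_le)
  have ub: "integral\<^sup>L ?M (\<lambda>t. ln (z t \<bullet> j)) \<le> C * measure ?M {t0<..<tE}" if j: "j \<in> Basis" for j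
  proof -
    have "integral\<^sup>L ?M (\<lambda>t. ln (z t \<bullet> j)) \<le> integral\<^sup>L ?M (\<lambda>t. C)"
    proof (rule integral_mono_AE)
      show "integrable ?M (\<lambda>t. C)" by (rule finite_measure.integrable_const[OF fin_Om])
      show "integrable ?M (\<lambda>t. ln (z t \<bullet> j))" using H j by blast
      have "AE t in ?M. 0 < z t \<bullet> j" using H j by blast
      then show "AE t in ?M. ln (z t \<bullet> j) \<le> C"
        using assms(2)
      proof eventually_elim
        case (elim t)
        have "ln (z t \<bullet> j) < z t \<bullet> j" using elim by simp
        moreover have "z t \<bullet> j \<le> norm (z t)" using Basis_le_norm[OF j, of "z t"] by linarith
        ultimately show ?case using elim by linarith
      qed
    qed
    then show ?thesis by (simp add: mult.commute)
  qed
  have "(\<Sum>j\<in>Basis. integral\<^sup>L ?M (\<lambda>t. ln (z t \<bullet> j))) \<le> (\<Sum>j\<in>(Basis::'z set). C * measure ?M {t0<..<tE})"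
    by (rule sum_mono) (rule ub)
  then have "- real DIM('z) * C * measure ?M {t0<..<tE} \<le> - (\<Sum>j\<in>Basis. integral\<^sup>L ?M (\<lambda>t. ln (z t \<bullet> j)))"
    by simp
  then show ?thesis using zn G by blast
qed

lemma Fw_shift:
  fixes f :: "'y::euclidean_space \<Rightarrow> 'y \<Rightarrow> 'z::euclidean_space \<Rightarrow> real \<Rightarrow> real"
    and c :: "'y \<Rightarrow> 'y \<Rightarrow> 'z \<Rightarrow> real \<Rightarrow> 'c::euclidean_space"
    and b :: "'y list \<Rightarrow> 'b::euclidean_space"
  assumes xw: "(y, z) \<in> Xsp t0 tE" "znonneg t0 tE z" "AE t in Om t0 tE. norm (z t) \<le> C"
    and e: "0 < e" and omega: "0 < \<omega>"
    and well_def: "\<forall>(y, z)\<in>Xsp t0 tE.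
        integrable (Om t0 tE) (\<lambda>t. f (wdot t0 tE y t) (y t) (z t) t) \<and>
        integrable (Om t0 tE) (\<lambda>t. (norm (c (wdot t0 tE y t) (y t) (z t) t))\<^sup>2)"
    and B: "\<forall>(y, z)\<in>Xsp t0 tE. znonneg t0 tE z \<longrightarrow>
        (\<forall>dy. weak_deriv t0 tE y dy \<longrightarrow> (\<forall>t\<in>{t0<..<tE}. (\<forall>j\<in>Basis. 0 \<le> z t \<bullet> j) \<longrightarrow>
             norm1 (c (dy t) (y t) (z t) t) \<le> B))
        \<and> norm1 (b (map y tps)) \<le> B"
    and Lf: "\<forall>t\<in>{t0<..<tE}. \<forall>v v' w w' u u'.
        \<bar>f v w u t - f v' w' u' t\<bar> \<le> Lf * (norm (v - v') + norm (w - w') + norm (u - u'))"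
    and Lc: "\<forall>t\<in>{t0<..<tE}. \<forall>v v' w w' u u'.
        norm (c v w u t - c v' w' u' t) \<le> Lc * (norm (v - v') + norm (w - w') + norm (u - u'))"
  shows "Fw t0 tE f c b tps \<omega> (y, \<lambda>t. z t + e *\<^sub>R One) - Fw t0 tE f c b tps \<omega> (y, z)
     \<le> e * (\<bar>Lf\<bar> * norm (One::'z) * measure (Om t0 tE) {t0<..<tE}
            + \<bar>B\<bar> * \<bar>Lc\<bar> * norm (One::'z) * measure (Om t0 tE) {t0<..<tE} / \<omega>)"
proof -
  let ?M = "Om t0 tE"
  let ?\<mu> = "measure ?M {t0<..<tE}"
  let ?z = "\<lambda>t. z t + e *\<^sub>R One"
  let ?dy = "wdot t0 tE y"
  let ?N = "norm (One::'z)"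
  have xe: "(y, ?z) \<in> Xsp t0 tE" by (rule shift_Xsp[OF xw(1,3)])
  have comp: "?z t \<bullet> j = z t \<bullet> j + e" if "j \<in> Basis" for t j
    using that by (simp add: inner_add_left One_inner)
  have zne: "znonneg t0 tE ?z" using xw(2) unfolding znonneg_def
    by eventually_elim (use comp e in force)
  have Bx: "\<And>y z. (y, z) \<in> Xsp t0 tE \<Longrightarrow> znonneg t0 tE z \<Longrightarrow>
        (\<forall>dy. weak_deriv t0 tE y dy \<longrightarrow> (\<forall>t\<in>{t0<..<tE}. (\<forall>j\<in>Basis. 0 \<le> z t \<bullet> j) \<longrightarrow>
             norm1 (c (dy t) (y t) (z t) t) \<le> B))" using B by blast
  have H1: "H1 t0 tE y" using xw(1) by (simp add: Xsp_def)
  have wd: "weak_deriv t0 tE y ?dy" using H1 unfolding H1_def wdot_def by (rule someI_ex)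
  have i1: "integrable ?M (\<lambda>t. f (?dy t) (y t) (?z t) t)"
   and i2: "integrable ?M (\<lambda>t. (norm (c (?dy t) (y t) (?z t) t))\<^sup>2)"
    using well_def xe by auto
  have i3: "integrable ?M (\<lambda>t. f (?dy t) (y t) (z t) t)"
   and i4: "integrable ?M (\<lambda>t. (norm (c (?dy t) (y t) (z t) t))\<^sup>2)"
    using well_def xw(1) by auto
  have nz: "norm (?z t - z t) = e * ?N" for t using e by simp
  have F: "Fobj t0 tE f (y, ?z) - Fobj t0 tE f (y, z) \<le> e * (\<bar>Lf\<bar> * ?N * ?\<mu>)"
  proof -
    have "Fobj t0 tE f (y, ?z) - Fobj t0 tE f (y, z) = integral\<^sup>L ?M (\<lambda>t. f (?dy t) (y t) (?z t) t - f (?dy t) (y t) (z t) t)"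
      using i1 i3 by (simp add: Fobj_def)
    also have "\<dots> \<le> integral\<^sup>L ?M (\<lambda>t. e * (\<bar>Lf\<bar> * ?N))"
    proof (rule integral_mono)
      show "integrable ?M (\<lambda>t. f (?dy t) (y t) (?z t) t - f (?dy t) (y t) (z t) t)" using i1 i3 by auto
      show "integrable ?M (\<lambda>t. e * (\<bar>Lf\<bar> * ?N))" by (rule finite_measure.integrable_const[OF fin_Om])
      fix t assume t: "t \<in> space ?M"
      then have t': "t \<in> {t0<..<tE}" by simp
      have "\<bar>f (?dy t) (y t) (?z t) t - f (?dy t) (y t) (z t) t\<bar> \<le> Lf * (norm (?dy t - ?dy t) + norm (y t - y t) + norm (?z t - z t))"
        using Lf t' by blast
      then have "f (?dy t) (y t) (?z t) t - f (?dy t) (y t) (z t) t \<le> Lf * (e * ?N)"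
        using nz[of t] by (simp only: diff_self norm_zero add_0_left abs_le_iff)
      also have "\<dots> \<le> \<bar>Lf\<bar> * (e * ?N)" using e by (simp add: mult_right_mono)
      also have "\<dots> = e * (\<bar>Lf\<bar> * ?N)" by (simp add: algebra_simps)
      finally show "f (?dy t) (y t) (?z t) t - f (?dy t) (y t) (z t) t \<le> e * (\<bar>Lf\<bar> * ?N)" .
    qed
    also have "\<dots> = e * (\<bar>Lf\<bar> * ?N * ?\<mu>)" by simp
    finally show ?thesis .
  qed
  have R: "rpen t0 tE c b tps (y, ?z) - rpen t0 tE c b tps (y, z) \<le> e * (2 * \<bar>B\<bar> * \<bar>Lc\<bar> * ?N * ?\<mu>)"
  proof -
    have "rpen t0 tE c b tps (y, ?z) - rpen t0 tE c b tps (y, z) = integral\<^sup>L ?M (\<lambda>t. (norm (c (?dy t) (y t) (?z t) t))\<^sup>2 - (norm (c (?dy t) (y t) (z t) t))\<^sup>2)"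
      using i2 i4 by (simp add: rpen_def)
    also have "\<dots> \<le> integral\<^sup>L ?M (\<lambda>t. e * (2 * \<bar>B\<bar> * \<bar>Lc\<bar> * ?N))"
    proof (rule integral_mono_AE)
      show "integrable ?M (\<lambda>t. (norm (c (?dy t) (y t) (?z t) t))\<^sup>2 - (norm (c (?dy t) (y t) (z t) t))\<^sup>2)" using i2 i4 by auto
      show "integrable ?M (\<lambda>t. e * (2 * \<bar>B\<bar> * \<bar>Lc\<bar> * ?N))" by (rule finite_measure.integrable_const[OF fin_Om])
      have sp: "AE t in ?M. t \<in> {t0<..<tE}" by (rule AE_I2) simp
      show "AE t in ?M. (norm (c (?dy t) (y t) (?z t) t))\<^sup>2 - (norm (c (?dy t) (y t) (z t) t))\<^sup>2 \<le> e * (2 * \<bar>B\<bar> * \<bar>Lc\<bar> * ?N)"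
        using xw(2) sp unfolding znonneg_def
      proof eventually_elim
        case (elim t)
        let ?c1 = "c (?dy t) (y t) (?z t) t" and ?c2 = "c (?dy t) (y t) (z t) t"
        have zp: "\<forall>j\<in>Basis. 0 \<le> ?z t \<bullet> j" using elim comp e by simp
        have "norm1 ?c1 \<le> B" using Bx[OF xe zne] wd elim(2) zp by blast
        then have b1: "norm ?c1 \<le> \<bar>B\<bar>" using norm_le_l1[of ?c1] unfolding norm1_def by linarith
        have "norm1 ?c2 \<le> B" using Bx[OF xw(1,2)] wd elim(1,2) by blast
        then have b2: "norm ?c2 \<le> \<bar>B\<bar>" using norm_le_l1[of ?c2] unfolding norm1_def by linarith
        have "norm (?c1 - ?c2) \<le> Lc * (norm (?dy t - ?dy t) + norm (y t - y t) + norm (?z t - z t))"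
          using Lc elim(2) by blast
        then have l: "norm (?c1 - ?c2) \<le> Lc * (e * ?N)"
          using nz[of t] by (simp only: diff_self norm_zero add_0_left)
        have l2: "Lc * (e * ?N) \<le> \<bar>Lc\<bar> * (e * ?N)" using e
          by (simp add: mult_right_mono)
        have d: "norm ?c1 - norm ?c2 \<le> \<bar>Lc\<bar> * (e * ?N)" using norm_triangle_ineq2[of ?c1 ?c2] l l2 by linarith
        have "(norm ?c1)\<^sup>2 - (norm ?c2)\<^sup>2 = (norm ?c1 - norm ?c2) * (norm ?c1 + norm ?c2)"
          by (simp add: power2_eq_square algebra_simps)
        also have "\<dots> \<le> (\<bar>Lc\<bar> * (e * ?N)) * (norm ?c1 + norm ?c2)"
          by (rule mult_right_mono[OF d]) simp
        also have "\<dots> \<le> (\<bar>Lc\<bar> * (e * ?N)) * (2 * \<bar>B\<bar>)"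
          by (rule mult_left_mono) (use b1 b2 e in auto)
        also have "\<dots> = e * (2 * \<bar>B\<bar> * \<bar>Lc\<bar> * ?N)" by (simp add: algebra_simps)
        finally show ?case .
      qed
    qed
    also have "\<dots> = e * (2 * \<bar>B\<bar> * \<bar>Lc\<bar> * ?N * ?\<mu>)" by simp
    finally show ?thesis .
  qed
  have "Fw t0 tE f c b tps \<omega> (y, ?z) - Fw t0 tE f c b tps \<omega> (y, z)
      = (Fobj t0 tE f (y, ?z) - Fobj t0 tE f (y, z)) + (rpen t0 tE c b tps (y, ?z) - rpen t0 tE c b tps (y, z)) / (2 * \<omega>)"
    by (simp add: Fw_def diff_divide_distrib)
  also have "\<dots> \<le> e * (\<bar>Lf\<bar> * ?N * ?\<mu>) + e * (2 * \<bar>B\<bar> * \<bar>Lc\<bar> * ?N * ?\<mu>) / (2 * \<omega>)"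
    using F R omega by (intro add_mono divide_right_mono) auto
  also have "\<dots> = e * (\<bar>Lf\<bar> * ?N * ?\<mu> + \<bar>B\<bar> * \<bar>Lc\<bar> * ?N * ?\<mu> / \<omega>)"
    using omega by (simp add: field_simps)
  finally show ?thesis .
qed


lemma tau_bounds:
  fixes \<tau> \<zeta> :: real
  assumes "0 < \<tau>" "\<tau> < 1" "0 < \<zeta>" "\<zeta> < 1"
  shows "\<tau> \<le> \<tau> powr (1 - \<zeta>)" "\<tau> * (- ln \<tau>) \<le> \<tau> powr (1 - \<zeta>) / \<zeta>"
proof -
  show "\<tau> \<le> \<tau> powr (1 - \<zeta>)"
    using powr_mono'[of "1 - \<zeta>" 1 \<tau>] assms by simp
  have "ln (1 / \<tau>) \<le> (1 / \<tau>) powr \<zeta> / \<zeta>"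
    using assms by (intro ln_powr_bound) auto
  then have "- ln \<tau> \<le> \<tau> powr (- \<zeta>) / \<zeta>"
    using assms by (simp add: ln_inverse inverse_powr powr_minus divide_inverse)
  then have "\<tau> * (- ln \<tau>) \<le> \<tau> * (\<tau> powr (- \<zeta>) / \<zeta>)"
    using assms by (intro mult_left_mono) auto
  also have "\<dots> = \<tau> powr (1 - \<zeta>) / \<zeta>"
    using assms by (simp add: powr_add[of \<tau> 1 "- \<zeta>", simplified])
  finally show "\<tau> * (- ln \<tau>) \<le> \<tau> powr (1 - \<zeta>) / \<zeta>" .
qed


theorem mainTheorem11:
  fixes t0 tE \<omega> \<zeta> :: real
    and tps :: "real list"
    and f :: "'y::euclidean_space \<Rightarrow> 'y \<Rightarrow> 'z::euclidean_space \<Rightarrow> real \<Rightarrow> real"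
    and c :: "'y \<Rightarrow> 'y \<Rightarrow> 'z \<Rightarrow> real \<Rightarrow> 'c::euclidean_space"
    and b :: "'y list \<Rightarrow> 'b::euclidean_space"
    and xs xw :: "(real \<Rightarrow> 'y) \<times> (real \<Rightarrow> 'z)"
    and xwt :: "real \<Rightarrow> (real \<Rightarrow> 'y) \<times> (real \<Rightarrow> 'z)"
  assumes interval: "t0 < tE"
    and tps_in: "set tps \<subseteq> {t0..tE}"
    and omega: "0 < \<omega>" "\<omega> < 1"
    and zeta: "0 < \<zeta>" "\<zeta> < 1"
    \<comment> \<open>F and r are well defined (integrands integrable) on X\<close>
    and well_def: "\<forall>(y, z)\<in>Xsp t0 tE.
        integrable (Om t0 tE) (\<lambda>t. f (wdot t0 tE y t) (y t) (z t) t) \<and>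
        integrable (Om t0 tE) (\<lambda>t. (norm (c (wdot t0 tE y t) (y t) (z t) t))\<^sup>2)"
    \<comment> \<open>(A.2)\<close>
    and A2_bound: "\<exists>B. \<forall>(y, z)\<in>Xsp t0 tE. znonneg t0 tE z \<longrightarrow>
        (\<forall>dy. weak_deriv t0 tE y dy \<longrightarrow> (\<forall>t\<in>{t0<..<tE}. (\<forall>j\<in>Basis. 0 \<le> z t \<bullet> j) \<longrightarrow>
             norm1 (c (dy t) (y t) (z t) t) \<le> B))
        \<and> norm1 (b (map y tps)) \<le> B"
    and A2_below: "\<exists>B. \<forall>(y, z)\<in>Xsp t0 tE. znonneg t0 tE z \<longrightarrow> B \<le> Fobj t0 tE f (y, z)"
    \<comment> \<open>(A.3)\<close>
    and A3_f: "\<exists>L. \<forall>t\<in>{t0<..<tE}. \<forall>v v' w w' u u'.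
        \<bar>f v w u t - f v' w' u' t\<bar> \<le> L * (norm (v - v') + norm (w - w') + norm (u - u'))"
    and A3_c: "\<exists>L. \<forall>t\<in>{t0<..<tE}. \<forall>v v' w w' u u'.
        norm (c v w u t - c v' w' u' t) \<le> L * (norm (v - v') + norm (w - w') + norm (u - u'))"
    and A3_b: "\<exists>L. \<forall>ys ys'. length ys = length tps \<longrightarrow> length ys' = length tps \<longrightarrow>
        norm (b ys - b ys') \<le> L * (\<Sum>i<length tps. norm (ys ! i - ys' ! i))"
    \<comment> \<open>x* is a global minimizer of the DOP\<close>
    and xs_feas: "xs \<in> Xsp t0 tE" "znonneg t0 tE (snd xs)"
        "b (map (fst xs) tps) = 0"
        "AE t in Om t0 tE. c (wdot t0 tE (fst xs) t) (fst xs t) (snd xs t) t = 0"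
    and xs_min: "\<forall>(y, z)\<in>Xsp t0 tE. znonneg t0 tE z \<longrightarrow> b (map y tps) = 0 \<longrightarrow>
        (AE t in Om t0 tE. c (wdot t0 tE y t) (y t) (z t) t = 0) \<longrightarrow>
        Fobj t0 tE f xs \<le> Fobj t0 tE f (y, z)"
    \<comment> \<open>x*_omega minimizes F_omega over {z \<ge> 0 a.e.}\<close>
    and xw_feas: "xw \<in> Xsp t0 tE" "znonneg t0 tE (snd xw)"
    and xw_min: "\<forall>(y, z)\<in>Xsp t0 tE. znonneg t0 tE z \<longrightarrow>
        Fw t0 tE f c b tps \<omega> xw \<le> Fw t0 tE f c b tps \<omega> (y, z)"
    \<comment> \<open>x*_{omega,tau} minimizes F_{omega,tau} over X, for every tau in (0,omega]\<close>
    and xwt_feas: "\<forall>\<tau>\<in>{0<..\<omega>}. xwt \<tau> \<in> Xsp t0 tE"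
    and xwt_min: "\<forall>\<tau>\<in>{0<..\<omega>}. \<forall>x\<in>Xsp t0 tE.
        Fwt t0 tE f c b tps \<omega> \<tau> (xwt \<tau>) \<le> Fwt t0 tE f c b tps \<omega> \<tau> x"
    \<comment> \<open>(A.4)\<close>
    and A4_w: "\<exists>C. (AE t in Om t0 tE. norm (snd xw t) \<le> C) \<and> normX t0 tE xw \<le> C"
    and A4_wt: "\<exists>C. \<forall>\<tau>\<in>{0<..\<omega>}.
        (AE t in Om t0 tE. norm (snd (xwt \<tau>) t) \<le> C) \<and> normX t0 tE (xwt \<tau>) \<le> C"
    and A4_s: "\<exists>C. normX t0 tE xs \<le> C"
  shows "(\<lambda>\<tau>. \<bar>Fw t0 tE f c b tps \<omega> (xwt \<tau>) - Fw t0 tE f c b tps \<omega> xw\<bar>)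
           \<in> O[at_right 0](\<lambda>\<tau>. \<tau> powr (1 - \<zeta>))"
proof -
  obtain Lf where Lf: "\<forall>t\<in>{t0<..<tE}. \<forall>v v' w w' u u'.
        \<bar>f v w u t - f v' w' u' t\<bar> \<le> Lf * (norm (v - v') + norm (w - w') + norm (u - u'))"
    using A3_f by blast
  obtain Lc where Lc: "\<forall>t\<in>{t0<..<tE}. \<forall>v v' w w' u u'.
        norm (c v w u t - c v' w' u' t) \<le> Lc * (norm (v - v') + norm (w - w') + norm (u - u'))"
    using A3_c by blast
  obtain B where B: "\<forall>(y, z)\<in>Xsp t0 tE. znonneg t0 tE z \<longrightarrow>
        (\<forall>dy. weak_deriv t0 tE y dy \<longrightarrow> (\<forall>t\<in>{t0<..<tE}. (\<forall>j\<in>Basis. 0 \<le> z t \<bullet> j) \<longrightarrow>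
             norm1 (c (dy t) (y t) (z t) t) \<le> B))
        \<and> norm1 (b (map y tps)) \<le> B"
    using A2_bound by blast
  obtain Cw where Cw: "AE t in Om t0 tE. norm (snd xw t) \<le> Cw" using A4_w by blast
  obtain Cwt where Cwt: "\<forall>\<tau>\<in>{0<..\<omega>}. AE t in Om t0 tE. norm (snd (xwt \<tau>) t) \<le> Cwt"
    using A4_wt by blast
  obtain yw zw where xw_eq: "xw = (yw, zw)" by (cases xw)
  define \<mu> where "\<mu> = measure (Om t0 tE) {t0<..<tE}"
  define N where "N = norm (One::'z)"
  define K where "K = \<bar>Lf\<bar> * N * \<mu> + \<bar>B\<bar> * \<bar>Lc\<bar> * N * \<mu> / \<omega>"
  define D where "D = real DIM('z)"
  have mu0: "0 \<le> \<mu>" unfolding \<mu>_def by simp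
  have D0: "0 \<le> D" unfolding D_def by simp
  let ?Fw = "Fw t0 tE f c b tps \<omega>"
  have key: "\<bar>?Fw (xwt \<tau>) - ?Fw xw\<bar> \<le> K * \<tau> + D * \<mu> * (\<tau> * (- ln \<tau>)) + D * Cwt * \<mu> * \<tau>"
    if tau: "\<tau> \<in> {0<..\<omega>}" for \<tau>
  proof -
    have tp: "0 < \<tau>" using tau by simp
    obtain ywt zwt where xwt_eq: "xwt \<tau> = (ywt, zwt)" by (cases "xwt \<tau>")
    have xwX: "(yw, zw) \<in> Xsp t0 tE" using xw_feas xw_eq by simp
    have zwn: "znonneg t0 tE zw" using xw_feas xw_eq by simp
    have zwC: "AE t in Om t0 tE. norm (zw t) \<le> Cw" using Cw xw_eq by simp
    have L2zw: "L2 t0 tE zw" using xwX by (simp add: Xsp_def)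
    let ?xe = "(yw, \<lambda>t. zw t + \<tau> *\<^sub>R One)"
    have xe: "?xe \<in> Xsp t0 tE" by (rule shift_Xsp[OF xwX zwC])
    obtain g where g: "Gamma t0 tE ?xe = ereal g" "g \<le> - D * ln \<tau> * \<mu>"
      using shift_Gamma[OF L2zw zwn zwC tp, of yw] unfolding D_def \<mu>_def by blast
    have le: "Fwt t0 tE f c b tps \<omega> \<tau> (xwt \<tau>) \<le> Fwt t0 tE f c b tps \<omega> \<tau> ?xe"
      using xwt_min tau xe by blast
    have fe: "Fwt t0 tE f c b tps \<omega> \<tau> ?xe = ereal (?Fw ?xe + \<tau> * g)"
      using g by (simp add: Fwt_def)
    have Gnf: "Gamma t0 tE (ywt, zwt) \<noteq> \<infinity>"
    proof
      assume "Gamma t0 tE (ywt, zwt) = \<infinity>"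
      then have "Fwt t0 tE f c b tps \<omega> \<tau> (xwt \<tau>) = \<infinity>" using tp xwt_eq by (simp add: Fwt_def)
      then show False using le fe by simp
    qed
    have zwtC: "AE t in Om t0 tE. norm (zwt t) \<le> Cwt" using Cwt tau xwt_eq by force
    obtain h where zwtn: "znonneg t0 tE zwt" and h: "Gamma t0 tE (ywt, zwt) = ereal h" "- D * Cwt * \<mu> \<le> h"
      using Gamma_fin[OF Gnf zwtC] unfolding D_def \<mu>_def by blast
    have "ereal (?Fw (xwt \<tau>) + \<tau> * h) \<le> ereal (?Fw ?xe + \<tau> * g)"
      using le fe h xwt_eq by (simp add: Fwt_def)
    then have m1: "?Fw (xwt \<tau>) + \<tau> * h \<le> ?Fw ?xe + \<tau> * g" by simp
    have xwtX: "(ywt, zwt) \<in> Xsp t0 tE" using xwt_feas tau xwt_eq by metis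
    have m0: "?Fw xw \<le> ?Fw (xwt \<tau>)" using xw_min xwtX zwtn xwt_eq by auto
    have sh: "?Fw ?xe - ?Fw (yw, zw) \<le> \<tau> * K"
      using Fw_shift[OF xwX zwn zwC tp omega(1) well_def B Lf Lc] unfolding K_def N_def \<mu>_def by simp
    have "\<tau> * g \<le> \<tau> * (- D * ln \<tau> * \<mu>)" using g(2) tp by (intro mult_left_mono) auto
    moreover have "\<tau> * (- D * Cwt * \<mu>) \<le> \<tau> * h" using h(2) tp by (intro mult_left_mono) auto
    ultimately have "?Fw (xwt \<tau>) - ?Fw xw \<le> K * \<tau> + D * \<mu> * (\<tau> * (- ln \<tau>)) + D * Cwt * \<mu> * \<tau>"
      using m1 sh xw_eq by (simp add: algebra_simps)
    then show ?thesis using m0 by simp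
  qed
  define Q where "Q = \<bar>K\<bar> + D * \<mu> / \<zeta> + D * \<bar>Cwt\<bar> * \<mu>"
  show ?thesis
  proof (rule bigoI[where c = Q])
    have ev: "eventually (\<lambda>\<tau>. \<tau> \<in> {0<..<\<omega>}) (at_right (0::real))"
      using omega(1) by (simp add: eventually_at_right_field) blast
    show "eventually (\<lambda>\<tau>. norm \<bar>?Fw (xwt \<tau>) - ?Fw xw\<bar> \<le> Q * norm (\<tau> powr (1 - \<zeta>))) (at_right 0)"
      using ev
    proof eventually_elim
      case (elim \<tau>)
      have t0': "0 < \<tau>" "\<tau> < 1" using elim omega by auto
      note tb = tau_bounds[OF t0' zeta]
      have k: "\<bar>?Fw (xwt \<tau>) - ?Fw xw\<bar> \<le> K * \<tau> + D * \<mu> * (\<tau> * (- ln \<tau>)) + D * Cwt * \<mu> * \<tau>"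
        using key elim by auto
      have p0: "0 \<le> \<tau> powr (1 - \<zeta>)" by simp
      have a1: "K * \<tau> \<le> \<bar>K\<bar> * \<tau> powr (1 - \<zeta>)"
        using tb(1) t0' by (metis abs_ge_self abs_ge_zero less_imp_le mult_mono mult_right_mono order.trans)
      have a2: "D * \<mu> * (\<tau> * (- ln \<tau>)) \<le> D * \<mu> * (\<tau> powr (1 - \<zeta>) / \<zeta>)"
        using tb(2) D0 mu0 by (intro mult_left_mono) auto
      have a3: "D * Cwt * \<mu> * \<tau> \<le> D * \<bar>Cwt\<bar> * \<mu> * \<tau> powr (1 - \<zeta>)"
      proof -
        have "D * Cwt * \<mu> * \<tau> \<le> D * \<bar>Cwt\<bar> * \<mu> * \<tau>"
          using D0 mu0 t0' by (intro mult_right_mono mult_left_mono) auto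
        also have "\<dots> \<le> D * \<bar>Cwt\<bar> * \<mu> * \<tau> powr (1 - \<zeta>)"
          using tb(1) D0 mu0 by (intro mult_left_mono) auto
        finally show ?thesis .
      qed
      have "\<bar>?Fw (xwt \<tau>) - ?Fw xw\<bar> \<le> Q * \<tau> powr (1 - \<zeta>)"
        using k a1 a2 a3 unfolding Q_def by (simp add: algebra_simps)
      then show ?case using p0 by simp
    qed
  qed
qed

end
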